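(* Let $(X,T)$ be a minimal dendric subshift over a finite alphabet $\mathcal{A}$. Then $(X,T)$ is balanced on letters if and only if it is balanced on factors. In particular, if $(X,T)$ is balanced (on letters, equivalently on factors), then for every factor $v\in\mathcal{L}(X)$ the frequency $\mu_v$ of $v$ is an additive topological eigenvalue of $(X,T)$, and every cylinder $[v]$ is a bounded remainder set.
   Context: $\mathcal{A}$ is a finite alphabet, $T$ is the shift on $\mathcal{A}^{\mathbb{Z}}$, $T((u_n)_n)=(u_{n+1})_n$. A subshift $(X,T)$ is a closed shift-invariant subset $X\subseteq\mathcal{A}^{\mathbb Z}$; it is minimal if it has no nonempty proper closed shift-invariant subset. $\mathcal{L}(X)$ is the set of finite words occurring as factors (blocks of consecutive letters) of elements of $X$, and $\mathcal{L}_n(X)$ those of length $n$. For $w\in\mathcal{L}(X)$ let $L(w)=\{a\in\mathcal{A}: aw\in\mathcal{L}(X)\}$, $R(w)=\{b\in\mathcal{A}: wb\in\mathcal{L}(X)\}$, $E(w)=\{(a,b): awb\in\mathcal{L}(X)\}$; the extension graph $\mathcal{E}(w)$ is the bipartite undirected graph whose vertex set is the disjoint union of $L(w)$ and $R(w)$ and whose edges are the pairs in $E(w)$. A minimal subshift is dendric if $\mathcal{E}(w)$ is a tree for every $w\in\mathcal{L}(X)$ (including the empty word). For finite words $w,v$, $|w|_v$ is the number of occurrences of $v$ as a factor of $w$ and $|w|$ is the length of $w$. $(X,T)$ is balanced on $v\in\mathcal{L}(X)$ if there is a constant $C_v$ such that $||w|_v-|w'|_v|\le C_v$ for all $w,w'\in\mathcal{L}(X)$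 with $|w|=|w'|$; it is balanced on letters if balanced on every letter, and balanced on factors if balanced on every $v\in\mathcal{L}(X)$. The cylinder of $v=v_0\cdots v_{n}$ is $[v]=\{x\in X: x_0\cdots x_n=v\}$. The frequency $\mu_v$ of $v$ is the (uniform) limit of $|w|_v/|w|$ over factors $w$ as $|w|\to\infty$ (equal to $\mu([v])$ for the invariant measure). $\theta\in\mathbb{R}$ is an additive topological eigenvalue if there is a nonzero continuous $f:X\to\mathbb{C}$ with $f(Tx)=e^{2i\pi\theta}f(x)$ for all $x\in X$. The cylinder $[v]$ is a bounded remainder set if $\sup_{x\in X,\,n\ge 0}\big|\#\{0\le i<n: T^ix\in[v]\}-n\mu_v\big|<\infty$. *)

theory Defs
  imports "HOL-Analysis.Analysis"
begin

text \<open>Configurations are bi-infinite sequences \<open>int \<Rightarrow> 'a\<close> over a finite alphabet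
  (the finite type \<open>'a\<close>).\<close>

definition shift :: "(int \<Rightarrow> 'a) \<Rightarrow> (int \<Rightarrow> 'a)" where
  "shift x = (\<lambda>n. x (n + 1))"

definition full_shift_top :: "(int \<Rightarrow> 'a) topology" where
  "full_shift_top = product_topology (\<lambda>_::int. discrete_topology (UNIV :: 'a set)) UNIV"

definition subshift :: "(int \<Rightarrow> 'a) set \<Rightarrow> bool" where
  "subshift X \<longleftrightarrow> closedin full_shift_top X \<and> shift ` X = X"

definition minimal_subshift :: "(int \<Rightarrow> 'a) set \<Rightarrow> bool" where
  "minimal_subshift X \<longleftrightarrow> subshift X \<and> X \<noteq> {} \<and>
     (\<forall>Y. subshift Y \<and> Y \<subseteq> X \<and> Y \<noteq> {} \<longrightarrow> Y = X)"

definition occurs_at :: "'a list \<Rightarrow> (int \<Rightarrow> 'a) \<Rightarrow> int \<Rightarrow> bool" where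
  "occurs_at w x i \<longleftrightarrow> (\<forall>j < length w. x (i + int j) = w ! j)"

definition lang :: "(int \<Rightarrow> 'a) set \<Rightarrow> 'a list set" where
  "lang X = {w. \<exists>x\<in>X. \<exists>i. occurs_at w x i}"

definition left_ext :: "(int \<Rightarrow> 'a) set \<Rightarrow> 'a list \<Rightarrow> 'a set" where
  "left_ext X w = {a. a # w \<in> lang X}"

definition right_ext :: "(int \<Rightarrow> 'a) set \<Rightarrow> 'a list \<Rightarrow> 'a set" where
  "right_ext X w = {b. w @ [b] \<in> lang X}"

definition bi_ext :: "(int \<Rightarrow> 'a) set \<Rightarrow> 'a list \<Rightarrow> ('a \<times> 'a) set" where
  "bi_ext X w = {(a, b). a # w @ [b] \<in> lang X}"

text \<open>Extension graph: bipartite, vertices \<open>Inl ` L(w) \<union> Inr ` R(w)\<close>, edges from \<open>E(w)\<close>.\<close>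
definition ext_vertices :: "(int \<Rightarrow> 'a) set \<Rightarrow> 'a list \<Rightarrow> ('a + 'a) set" where
  "ext_vertices X w = Inl ` left_ext X w \<union> Inr ` right_ext X w"

fun ext_adj :: "(int \<Rightarrow> 'a) set \<Rightarrow> 'a list \<Rightarrow> ('a + 'a) \<Rightarrow> ('a + 'a) \<Rightarrow> bool" where
  "ext_adj X w (Inl a) (Inr b) = ((a, b) \<in> bi_ext X w)"
| "ext_adj X w (Inr b) (Inl a) = ((a, b) \<in> bi_ext X w)"
| "ext_adj X w _ _ = False"

text \<open>Undirected (simple) graphs given by a vertex set and a symmetric adjacency relation.\<close>
definition is_walk :: "'v set \<Rightarrow> ('v \<Rightarrow> 'v \<Rightarrow> bool) \<Rightarrow> 'v list \<Rightarrow> bool" where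
  "is_walk V adj p \<longleftrightarrow> p \<noteq> [] \<and> set p \<subseteq> V \<and> (\<forall>i. i + 1 < length p \<longrightarrow> adj (p ! i) (p ! (i + 1)))"

definition graph_connected :: "'v set \<Rightarrow> ('v \<Rightarrow> 'v \<Rightarrow> bool) \<Rightarrow> bool" where
  "graph_connected V adj \<longleftrightarrow>
     (\<forall>u\<in>V. \<forall>v\<in>V. \<exists>p. is_walk V adj p \<and> hd p = u \<and> last p = v)"

definition has_cycle :: "'v set \<Rightarrow> ('v \<Rightarrow> 'v \<Rightarrow> bool) \<Rightarrow> bool" where
  "has_cycle V adj \<longleftrightarrow>
     (\<exists>c. length c \<ge> 3 \<and> distinct c \<and> is_walk V adj c \<and> adj (last c) (hd c))"

definition is_tree :: "'v set \<Rightarrow> ('v \<Rightarrow> 'v \<Rightarrow> bool) \<Rightarrow> bool" where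
  "is_tree V adj \<longleftrightarrow> V \<noteq> {} \<and> graph_connected V adj \<and> \<not> has_cycle V adj"

definition dendric :: "(int \<Rightarrow> 'a) set \<Rightarrow> bool" where
  "dendric X \<longleftrightarrow> minimal_subshift X \<and>
     (\<forall>w\<in>lang X. is_tree (ext_vertices X w) (ext_adj X w))"

definition occ_count :: "'a list \<Rightarrow> 'a list \<Rightarrow> nat" where
  "occ_count w v = card {i. i + length v \<le> length w \<and> take (length v) (drop i w) = v}"

definition balanced_on :: "(int \<Rightarrow> 'a) set \<Rightarrow> 'a list \<Rightarrow> bool" where
  "balanced_on X v \<longleftrightarrow> (\<exists>C::nat. \<forall>w\<in>lang X. \<forall>w'\<in>lang X. length w = length w' \<longrightarrow>
      \<bar>int (occ_count w v) - int (occ_count w' v)\<bar> \<le> int C)"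

definition balanced_on_letters :: "(int \<Rightarrow> 'a) set \<Rightarrow> bool" where
  "balanced_on_letters X \<longleftrightarrow> (\<forall>a. balanced_on X [a])"

definition balanced_on_factors :: "(int \<Rightarrow> 'a) set \<Rightarrow> bool" where
  "balanced_on_factors X \<longleftrightarrow> (\<forall>v\<in>lang X. balanced_on X v)"

definition is_frequency :: "(int \<Rightarrow> 'a) set \<Rightarrow> 'a list \<Rightarrow> real \<Rightarrow> bool" where
  "is_frequency X v f \<longleftrightarrow> (\<forall>\<epsilon>>0. \<exists>N. \<forall>w\<in>lang X. length w \<ge> N \<longrightarrow>
      \<bar>real (occ_count w v) / real (length w) - f\<bar> < \<epsilon>)"

definition additive_top_eigenvalue :: "(int \<Rightarrow> 'a) set \<Rightarrow> real \<Rightarrow> bool" where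
  "additive_top_eigenvalue X \<theta> \<longleftrightarrow> (\<exists>g :: (int \<Rightarrow> 'a) \<Rightarrow> complex.
      continuous_map (subtopology full_shift_top X) euclidean g \<and>
      (\<exists>x\<in>X. g x \<noteq> 0) \<and>
      (\<forall>x\<in>X. g (shift x) = exp (2 * pi * \<i> * complex_of_real \<theta>) * g x))"

definition cylinder :: "(int \<Rightarrow> 'a) set \<Rightarrow> 'a list \<Rightarrow> (int \<Rightarrow> 'a) set" where
  "cylinder X v = {x\<in>X. occurs_at v x 0}"

definition bounded_remainder_set :: "(int \<Rightarrow> 'a) set \<Rightarrow> 'a list \<Rightarrow> real \<Rightarrow> bool" where
  "bounded_remainder_set X v \<mu> \<longleftrightarrow> (\<exists>B::real. \<forall>x\<in>X. \<forall>n::nat.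
      \<bar>real (card {i. i < n \<and> (shift ^^ i) x \<in> cylinder X v}) - real n * \<mu>\<bar> \<le> B)"

end

theory Submission
  imports Defs "HOL-Library.Function_Algebras"
begin


definition Occ :: "'a list \<Rightarrow> 'a list \<Rightarrow> nat set" where
  "Occ s u = {i. i + length u \<le> length s \<and> take (length u) (drop i s) = u}"

lemma occ_count_Occ: "occ_count s u = card (Occ s u)"
  by (simp add: occ_count_def Occ_def)

lemma finite_Occ[simp]: "finite (Occ s u)"
  by (rule finite_subset[of _ "{..length s}"]) (auto simp: Occ_def)

lemma occ_le: "occ_count s u \<le> length s + 1"
proof -
  have "card (Occ s u) \<le> card {..length s}"
    by (rule card_mono) (auto simp: Occ_def)
  thus ?thesis by (simp add: occ_count_Occ)
qed

lemma take_drop_app1: "i + n \<le> length p \<Longrightarrow> take n (drop i (p @ q)) = take n (drop i p)"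
  by simp

lemma take_drop_app2: "length p \<le> i \<Longrightarrow> take n (drop i (p @ q)) = take n (drop (i - length p) q)"
  by simp

lemma occ_app_ge: "occ_count p v + occ_count q v \<le> occ_count (p @ q) v + 1"
proof -
  let ?A = "Occ p v" and ?B = "(\<lambda>i. i + length p) ` Occ q v"
  have A: "?A \<subseteq> Occ (p@q) v" by (auto simp: Occ_def)
  have B: "?B \<subseteq> Occ (p@q) v" by (auto simp: Occ_def)
  have AB: "?A \<inter> ?B \<subseteq> {length p}" by (auto simp: Occ_def)
  have "card ?A + card ?B = card (?A \<union> ?B) + card (?A \<inter> ?B)"
    by (rule card_Un_Int) auto
  also have "card (?A \<union> ?B) \<le> card (Occ (p@q) v)" by (rule card_mono) (use A B in auto)
  also have "card (?A \<inter> ?B) \<le> 1"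
    using card_mono[OF _ AB] by simp
  finally have "card ?A + card ?B \<le> card (Occ (p@q) v) + 1" by simp
  moreover have "card ?B = card (Occ q v)" by (rule card_image) (auto simp: inj_on_def)
  ultimately show ?thesis by (simp add: occ_count_Occ)
qed

lemma occ_app_le: "occ_count (p @ q) v \<le> occ_count p v + occ_count q v + length v"
proof -
  let ?A = "Occ p v" and ?B = "(\<lambda>i. i + length p) ` Occ q v"
    and ?C = "{i. i < length p \<and> length p < i + length v}"
  have sub: "Occ (p@q) v \<subseteq> ?A \<union> ?B \<union> ?C"
  proof
    fix i assume i: "i \<in> Occ (p@q) v"
    show "i \<in> ?A \<union> ?B \<union> ?C"
    proof (cases "i + length v \<le> length p")
      case True thus ?thesis using i by (auto simp: Occ_def)
    next
      case False
      show ?thesis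
      proof (cases "length p \<le> i")
        case True
        hence "i - length p \<in> Occ q v" using i by (auto simp: Occ_def)
        moreover have "i = (i - length p) + length p" using True by simp
        ultimately show ?thesis by blast
      next
        case F2: False thus ?thesis using False by auto
      qed
    qed
  qed
  have Cs: "?C \<subseteq> {length p - length v..<length p}" by auto
  have "card ?C \<le> length v" using card_mono[OF _ Cs] by simp
  have "card (Occ (p@q) v) \<le> card (?A \<union> ?B \<union> ?C)"
    by (rule card_mono) (use sub in auto)
  also have "\<dots> \<le> card ?A + card ?B + card ?C"
    by (meson card_Un_le add_le_mono le_trans order_refl)
  also have "card ?B = card (Occ q v)" by (rule card_image) (auto simp: inj_on_def)
  finally show ?thesis using \<open>card ?C \<le> length v\<close> by (simp add: occ_count_Occ)
qed


lemma Occ_snoc: "Occ s (u @ [b]) = {i \<in> Occ s u. i + length u < length s \<and> s ! (i + length u) = b}"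
proof -
  have "take (Suc (length u)) (drop i s) = u @ [b] \<longleftrightarrow> take (length u) (drop i s) = u \<and> s ! (i + length u) = b"
    if "i + length u < length s" for i
    using that by (simp add: take_Suc_conv_app_nth add.commute)
  thus ?thesis by (auto simp: Occ_def)
qed

lemma sum_letters_gen:
  fixes f :: "nat \<Rightarrow> 'a::finite"
  assumes "finite A"
  shows "(\<Sum>b\<in>UNIV. card {i\<in>A. f i = b}) = card A"
proof -
  have "card (\<Union>b\<in>UNIV. {i\<in>A. f i = b}) = (\<Sum>b\<in>UNIV. card {i\<in>A. f i = b})"
    by (rule card_UN_disjoint) (use assms in auto)
  moreover have "(\<Union>b\<in>UNIV. {i\<in>A. f i = b}) = A" by auto
  ultimately show ?thesis by simp
qed

lemma occ_right:
  fixes s u :: "'a::finite list"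
  shows "(\<Sum>b\<in>UNIV. occ_count s (u @ [b])) \<le> occ_count s u"
    and "occ_count s u \<le> (\<Sum>b\<in>UNIV. occ_count s (u @ [b])) + 1"
proof -
  let ?A = "{i \<in> Occ s u. i + length u < length s}"
  have eq: "(\<Sum>b\<in>UNIV. occ_count s (u @ [b])) = card ?A"
    unfolding occ_count_Occ Occ_snoc
    using sum_letters_gen[of ?A "\<lambda>i. s ! (i + length u)"] by (simp add: conj_assoc)
  have "card ?A \<le> card (Occ s u)" by (rule card_mono) auto
  thus "(\<Sum>b\<in>UNIV. occ_count s (u @ [b])) \<le> occ_count s u"
    using eq by (simp add: occ_count_Occ)
  have "Occ s u \<subseteq> insert (length s - length u) ?A" by (auto simp: Occ_def)
  hence "card (Occ s u) \<le> card (insert (length s - length u) ?A)" by (rule card_mono[rotated]) auto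
  also have "\<dots> \<le> card ?A + 1" by (simp add: card_insert_if)
  finally show "occ_count s u \<le> (\<Sum>b\<in>UNIV. occ_count s (u @ [b])) + 1"
    using eq by (simp add: occ_count_Occ)
qed

lemma Occ_cons: "Suc ` Occ s (a # u) = {i \<in> Occ s u. 0 < i \<and> s ! (i - 1) = a}"
proof -
  have "take (Suc (length u)) (drop j s) = a # u \<longleftrightarrow> take (length u) (drop (Suc j) s) = u \<and> s ! j = a"
    if "Suc j + length u \<le> length s" for j
  proof -
    have "drop j s = s ! j # drop (Suc j) s" using that by (simp add: Cons_nth_drop_Suc)
    thus ?thesis by auto
  qed
  hence "Suc ` Occ s (a # u) = Suc ` {j. Suc j + length u \<le> length s \<and> take (length u) (drop (Suc j) s) = u \<and> s ! j = a}"
    by (auto simp: Occ_def)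
  also have "\<dots> = {i \<in> Occ s u. 0 < i \<and> s ! (i - 1) = a}"
  proof (rule set_eqI, rule iffI)
    fix i assume "i \<in> {i \<in> Occ s u. 0 < i \<and> s ! (i - 1) = a}"
    hence "i - 1 \<in> {j. Suc j + length u \<le> length s \<and> take (length u) (drop (Suc j) s) = u \<and> s ! j = a}"
      and "i = Suc (i - 1)" by (auto simp: Occ_def)
    thus "i \<in> Suc ` {j. Suc j + length u \<le> length s \<and> take (length u) (drop (Suc j) s) = u \<and> s ! j = a}"
      by (metis (no_types, lifting) image_eqI)
  qed (auto simp: Occ_def)
  finally show ?thesis .
qed

lemma occ_left:
  fixes s u :: "'a::finite list"
  shows "(\<Sum>b\<in>UNIV. occ_count s (b # u)) \<le> occ_count s u"
    and "occ_count s u \<le> (\<Sum>b\<in>UNIV. occ_count s (b # u)) + 1"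
proof -
  let ?A = "{i \<in> Occ s u. 0 < i}"
  have c: "occ_count s (b # u) = card {i \<in> ?A. s ! (i - 1) = b}" for b
  proof -
    have "occ_count s (b # u) = card (Suc ` Occ s (b # u))"
      by (simp add: occ_count_Occ card_image)
    thus ?thesis by (simp add: Occ_cons conj_assoc)
  qed
  have eq: "(\<Sum>b\<in>UNIV. occ_count s (b # u)) = card ?A"
    unfolding c using sum_letters_gen[of ?A "\<lambda>i. s ! (i - 1)"] by simp
  have "card ?A \<le> card (Occ s u)" by (rule card_mono) auto
  thus "(\<Sum>b\<in>UNIV. occ_count s (b # u)) \<le> occ_count s u"
    using eq by (simp add: occ_count_Occ)
  have "Occ s u \<subseteq> insert 0 ?A" by auto
  hence "card (Occ s u) \<le> card (insert 0 ?A)" by (rule card_mono[rotated]) auto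
  also have "\<dots> \<le> card ?A + 1" by (simp add: card_insert_if)
  finally show "occ_count s u \<le> (\<Sum>b\<in>UNIV. occ_count s (b # u)) + 1"
    using eq by (simp add: occ_count_Occ)
qed

lemma lang_factor: "p @ q @ r \<in> lang X \<Longrightarrow> q \<in> lang X"
proof -
  assume "p @ q @ r \<in> lang X"
  then obtain x i where x: "x \<in> X" "occurs_at (p @ q @ r) x i" by (auto simp: lang_def)
  have "occurs_at q x (i + int (length p))"
    unfolding occurs_at_def
  proof (intro allI impI)
    fix j assume j: "j < length q"
    have "x (i + int (length p + j)) = (p @ q @ r) ! (length p + j)"
      using x(2) j unfolding occurs_at_def by (metis length_append add_less_cancel_left trans_less_add1)
    also have "\<dots> = q ! j" using j by (simp add: nth_append)
    finally show "x (i + int (length p) + int j) = q ! j" by (simp add: add.assoc)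
  qed
  thus ?thesis using x(1) by (auto simp: lang_def)
qed

lemma lang_occ: "s \<in> lang X \<Longrightarrow> 0 < occ_count s u \<Longrightarrow> u \<in> lang X"
proof -
  assume s: "s \<in> lang X" and "0 < occ_count s u"
  then obtain i where i: "i \<in> Occ s u" by (auto simp: occ_count_Occ card_gt_0_iff)
  have "take (length u) (drop i s) = u" using i by (simp add: Occ_def)
  hence "s = take i s @ u @ drop (length u) (drop i s)" by (metis append_take_drop_id)
  thus ?thesis using s lang_factor by metis
qed

lemma occ_not_lang: "s \<in> lang X \<Longrightarrow> u \<notin> lang X \<Longrightarrow> occ_count s u = 0"
  using lang_occ by blast

definition word_at :: "(int \<Rightarrow> 'a) \<Rightarrow> int \<Rightarrow> nat \<Rightarrow> 'a list" where
  "word_at x a n = map (\<lambda>j. x (a + int j)) [0..<n]"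

lemma word_at_lang: "x \<in> X \<Longrightarrow> word_at x a n \<in> lang X"
  by (auto simp: lang_def occurs_at_def word_at_def)

lemma length_word_at[simp]: "length (word_at x a n) = n"
  by (simp add: word_at_def)

lemma Occ_word_at: "Occ (word_at x a m) v = {i. i + length v \<le> m \<and> occurs_at v x (a + int i)}"
proof -
  have "take (length v) (drop i (word_at x a m)) = v \<longleftrightarrow> occurs_at v x (a + int i)"
    if "i + length v \<le> m" for i
    using that by (auto simp: word_at_def occurs_at_def list_eq_iff_nth_eq add.assoc)
  thus ?thesis by (auto simp: Occ_def)
qed




lemma is_walk_mono: "is_walk V adj p \<Longrightarrow> (\<And>x y. adj x y \<Longrightarrow> adj' x y) \<Longrightarrow> is_walk V adj' p"
  by (auto simp: is_walk_def)

lemma has_cycle_mono: "has_cycle V adj \<Longrightarrow> (\<And>x y. adj x y \<Longrightarrow> adj' x y) \<Longrightarrow> has_cycle V adj'"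
  unfolding has_cycle_def by (meson is_walk_mono)

lemma leaf_exists:
  assumes fin: "finite V" and sym: "\<And>u v. adj u v \<Longrightarrow> adj v u" and irr: "\<And>u. \<not> adj u u"
    and acyc: "\<not> has_cycle V adj" and e: "u0 \<in> V" "v0 \<in> V" "adj u0 v0"
  shows "\<exists>v\<in>V. \<exists>u\<in>V. adj v u \<and> (\<forall>u'\<in>V. adj v u' \<longrightarrow> u' = u)"
proof -
  define P where "P = {p. distinct p \<and> is_walk V adj p}"
  have "P \<subseteq> {p. set p \<subseteq> V \<and> length p \<le> card V}"
    by (auto simp: P_def is_walk_def intro: card_mono[OF fin] simp flip: distinct_card)
  hence finP: "finite P" using finite_lists_length_le[OF fin] by (rule finite_subset)
  have "u0 \<noteq> v0" using irr e by auto
  hence p0: "[u0, v0] \<in> P" using e by (auto simp: P_def is_walk_def nth_Cons split: nat.splits)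
  define m where "m = Max (length ` P)"
  have "m \<in> length ` P" unfolding m_def using finP p0 by (intro Max_in) auto
  then obtain p where pP: "p \<in> P" and pm: "length p = m" by auto
  have maxp: "length q \<le> length p" if "q \<in> P" for q
    using Max_ge[OF finite_imageI[OF finP] imageI[OF that, of length]] pm unfolding m_def by simp
  have dp: "distinct p" and wp: "is_walk V adj p" using pP by (auto simp: P_def)
  define n where "n = length p"
  have "2 \<le> n" using maxp[OF p0] by (simp add: n_def)
  define v where "v = p ! (n - 1)"
  define u where "u = p ! (n - 2)"
  have lastp: "last p = v" using \<open>2 \<le> n\<close> by (metis v_def n_def last_conv_nth list.size(3) not_numeral_le_zero One_nat_def)
  have "adj u v" using wp \<open>2 \<le> n\<close> unfolding is_walk_def u_def v_def n_def
    by (metis Suc_diff_Suc Suc_eq_plus1 diff_Suc_1 diff_less numeral_2_eq_2 less_le_trans zero_less_Suc le_add_diff_inverse2 One_nat_def)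
  have vV: "v \<in> V" and uV: "u \<in> V" using wp \<open>2 \<le> n\<close> unfolding is_walk_def u_def v_def n_def by auto
  have "\<forall>u'\<in>V. adj v u' \<longrightarrow> u' = u"
  proof (intro ballI impI)
    fix u' assume u'V: "u' \<in> V" and a: "adj v u'"
    show "u' = u"
    proof (cases "u' \<in> set p")
      case False
      have "p @ [u'] \<in> P"
        unfolding P_def
      proof (intro CollectI conjI)
        show "distinct (p @ [u'])" using dp False by simp
        show "is_walk V adj (p @ [u'])"
          unfolding is_walk_def
        proof (intro conjI allI impI)
          show "p @ [u'] \<noteq> []" by simp
          show "set (p @ [u']) \<subseteq> V" using wp u'V by (auto simp: is_walk_def)
          fix i assume i: "i + 1 < length (p @ [u'])"
          show "adj ((p @ [u']) ! i) ((p @ [u']) ! (i + 1))"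
          proof (cases "i + 1 < n")
            case True thus ?thesis using wp by (auto simp: is_walk_def nth_append n_def)
          next
            case False
            hence "i = n - 1" using i by (simp add: n_def)
            have "i < length p" using \<open>i = n - 1\<close> \<open>2 \<le> n\<close> by (simp add: n_def)
            hence "(p @ [u']) ! i = v" using \<open>i = n - 1\<close> by (simp add: nth_append n_def v_def)
            moreover have "i + 1 = length p" using \<open>i = n - 1\<close> \<open>2 \<le> n\<close> by (simp add: n_def)
            hence "(p @ [u']) ! (i + 1) = u'" by simp
            ultimately show ?thesis using a by simp
          qed
        qed
      qed
      with maxp have "length (p @ [u']) \<le> length p" by blast
      thus ?thesis by simp
    next
      case True
      then obtain j where j: "j < n" "p ! j = u'" by (auto simp: in_set_conv_nth n_def)
      have "u' \<noteq> v" using irr a by auto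
      hence "j \<noteq> n - 1" using j by (auto simp: v_def)
      show ?thesis
      proof (cases "j = n - 2")
        case True thus ?thesis using j by (simp add: u_def)
      next
        case False
        hence j3: "j + 3 \<le> n" using j \<open>j \<noteq> n - 1\<close> by linarith
        define c where "c = drop j p"
        have "has_cycle V adj"
          unfolding has_cycle_def
        proof (intro exI conjI)
          show "3 \<le> length c" using j3 by (simp add: c_def n_def)
          show "distinct c" using dp by (simp add: c_def)
          show "is_walk V adj c"
            using wp j3 unfolding is_walk_def c_def n_def
            by (auto dest: in_set_dropD simp: add.assoc)
          have "last c = v" using j lastp by (simp add: c_def n_def)
          moreover have "hd c = u'" using j by (simp add: c_def n_def hd_drop_conv_nth)
          ultimately show "adj (last c) (hd c)" using a by simp
        qed
        with acyc show ?thesis by blast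
      qed
    qed
  qed
  thus ?thesis using vV uV \<open>adj u v\<close> sym by blast
qed

lemma forest_edges_good_aux:
  fixes wt :: "'v \<Rightarrow> 'v \<Rightarrow> 'w::ab_group_add"
  assumes "card {(x, y). x \<in> V \<and> y \<in> V \<and> adj x y} = N"
    and fin: "finite V" and sym: "\<And>u v. adj u v \<Longrightarrow> adj v u" and irr: "\<And>u. \<not> adj u u"
    and acyc: "\<not> has_cycle V adj" and wsym: "\<And>u v. wt u v = wt v u"
    and G0: "0 \<in> G" and Gm: "\<And>x y. x \<in> G \<Longrightarrow> y \<in> G \<Longrightarrow> x - y \<in> G"
    and sums: "\<And>z. z \<in> V \<Longrightarrow> (\<Sum>y\<in>{y\<in>V. adj z y}. wt z y) \<in> G"
  shows "\<forall>x\<in>V. \<forall>y\<in>V. adj x y \<longrightarrow> wt x y \<in> G"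
  using assms(1) sym irr acyc sums
proof (induction N arbitrary: adj rule: less_induct)
  case (less N adj)
  show ?case
  proof (cases "\<exists>x\<in>V. \<exists>y\<in>V. adj x y")
    case False thus ?thesis by blast
  next
    case True
    then obtain x0 y0 where e: "x0 \<in> V" "y0 \<in> V" "adj x0 y0" by blast
    from leaf_exists[OF fin less.prems(2,3,4) e]
    obtain v u where vu: "v \<in> V" "u \<in> V" "adj v u" and uniq: "\<And>u'. u' \<in> V \<Longrightarrow> adj v u' \<Longrightarrow> u' = u"
      by blast
    have uv: "u \<noteq> v" using less.prems(3) vu(3) by metis
    have Nv: "{y\<in>V. adj v y} = {u}"
    proof
      show "{y\<in>V. adj v y} \<subseteq> {u}" using uniq by blast
      show "{u} \<subseteq> {y\<in>V. adj v y}" using vu by blast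
    qed
    have wvu: "wt v u \<in> G" using less.prems(5)[OF vu(1)] by (simp add: Nv)
    define adj' where "adj' a b \<longleftrightarrow> adj a b \<and> \<not> ((a = u \<and> b = v) \<or> (a = v \<and> b = u))" for a b
    have sym': "\<And>a b. adj' a b \<Longrightarrow> adj' b a" using less.prems(2) unfolding adj'_def by blast
    have irr': "\<And>a. \<not> adj' a a" using less.prems(3) unfolding adj'_def by blast
    have acyc': "\<not> has_cycle V adj'" using less.prems(4) has_cycle_mono[of V adj' adj]
      by (auto simp: adj'_def)
    let ?E = "{(x, y). x \<in> V \<and> y \<in> V \<and> adj x y}"
    let ?E' = "{(x, y). x \<in> V \<and> y \<in> V \<and> adj' x y}"
    have finE: "finite ?E" by (rule finite_subset[of _ "V \<times> V"]) (use fin in auto)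
    have "?E' \<subset> ?E" using vu by (auto simp: adj'_def)
    hence lt: "card ?E' < N" using less.prems(1) finE psubset_card_mono by blast
    have sums': "(\<Sum>y\<in>{y\<in>V. adj' z y}. wt z y) \<in> G" if z: "z \<in> V" for z
    proof -
      consider "z = v" | "z = u" | "z \<noteq> u" "z \<noteq> v" by blast
      thus ?thesis
      proof cases
        case 1
        have "{y\<in>V. adj' z y} = {}" using 1 Nv by (auto simp: adj'_def)
        thus ?thesis using G0 by (metis sum.empty)
      next
        case 2
        have eqN: "{y\<in>V. adj' z y} = {y\<in>V. adj z y} - {v}" using 2 uv by (auto simp: adj'_def)
        have vin: "v \<in> {y\<in>V. adj z y}" using 2 vu less.prems(2) by blast
        have finN: "finite {y\<in>V. adj z y}" using fin by simp
        have "(\<Sum>y\<in>{y\<in>V. adj' z y}. wt z y) = (\<Sum>y\<in>{y\<in>V. adj z y}. wt z y) - wt z v"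
          unfolding eqN using sum_diff1[OF finN, of "wt z" v] vin by presburger
        moreover have "wt z v \<in> G" using 2 wvu wsym by metis
        ultimately show ?thesis using Gm less.prems(5)[OF z] by simp
      next
        case 3
        have "{y\<in>V. adj' z y} = {y\<in>V. adj z y}" using 3 by (auto simp: adj'_def)
        thus ?thesis using less.prems(5)[OF z] by simp
      qed
    qed
    have IH: "\<forall>x\<in>V. \<forall>y\<in>V. adj' x y \<longrightarrow> wt x y \<in> G"
      using less.IH[OF lt refl sym' irr' acyc' sums'] .
    show ?thesis
    proof (intro ballI impI)
      fix x y assume "x \<in> V" "y \<in> V" "adj x y"
      show "wt x y \<in> G"
      proof (cases "adj' x y")
        case True thus ?thesis using IH \<open>x \<in> V\<close> \<open>y \<in> V\<close> by blast
      next
        case False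
        hence "(x = u \<and> y = v) \<or> (x = v \<and> y = u)" using \<open>adj x y\<close> by (auto simp: adj'_def)
        thus ?thesis using wvu wsym by metis
      qed
    qed
  qed
qed

lemma forest_edges_good:
  fixes wt :: "'v \<Rightarrow> 'v \<Rightarrow> 'w::ab_group_add"
  assumes fin: "finite V" and sym: "\<And>u v. adj u v \<Longrightarrow> adj v u" and irr: "\<And>u. \<not> adj u u"
    and acyc: "\<not> has_cycle V adj" and wsym: "\<And>u v. wt u v = wt v u"
    and G0: "0 \<in> G" and Gm: "\<And>x y. x \<in> G \<Longrightarrow> y \<in> G \<Longrightarrow> x - y \<in> G"
    and sums: "\<And>z. z \<in> V \<Longrightarrow> (\<Sum>y\<in>{y\<in>V. adj z y}. wt z y) \<in> G"
    and "x \<in> V" "y \<in> V" "adj x y"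
  shows "wt x y \<in> G"
  using forest_edges_good_aux[OF refl fin sym irr acyc wsym G0 Gm sums] assms(9-11) by blast




lemma int_sum_close:
  fixes f :: "'b \<Rightarrow> nat"
  assumes "sum f A \<le> m" "m \<le> sum f A + 1"
  shows "\<bar>int m - (\<Sum>b\<in>A. int (f b))\<bar> \<le> 1"
proof -
  have e: "(\<Sum>b\<in>A. int (f b)) = int (sum f A)" by simp
  have "int (sum f A) \<le> int m" using assms(1) by (simp only: of_nat_le_iff)
  moreover have "int m \<le> int (sum f A + 1)" using assms(2) by (simp only: of_nat_le_iff)
  ultimately show ?thesis unfolding e by simp
qed

lemma lang_pre: "a # u @ [b] \<in> lang X \<Longrightarrow> a # u \<in> lang X"
  using lang_factor[of "[]" "a # u" "[b]"] by simp

lemma lang_suf: "a # u @ [b] \<in> lang X \<Longrightarrow> u @ [b] \<in> lang X"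
  using lang_factor[of "[a]" "u @ [b]" "[]"] by simp

lemma sum_fun_app: "finite A \<Longrightarrow> (\<Sum>y\<in>A. f y) s = (\<Sum>y\<in>A. f y s)"
  by (induction A rule: finite_induct) auto

definition goodf :: "(int \<Rightarrow> 'a::finite) set \<Rightarrow> ('a list \<Rightarrow> int) \<Rightarrow> bool" where
  "goodf X \<phi> \<longleftrightarrow> (\<exists>c::'a\<Rightarrow>int. \<exists>K::int. \<forall>s\<in>lang X.
      \<bar>\<phi> s - (\<Sum>a\<in>UNIV. c a * int (occ_count s [a]))\<bar> \<le> K)"

lemma goodf_0: "goodf X 0"
  unfolding goodf_def by (rule exI[of _ "\<lambda>_. 0"], rule exI[of _ 0]) simp

lemma goodf_diff:
  assumes "goodf X \<phi>" "goodf X \<psi>" shows "goodf X (\<phi> - \<psi>)"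
proof -
  obtain c K where c: "\<forall>s\<in>lang X. \<bar>\<phi> s - (\<Sum>a\<in>UNIV. c a * int (occ_count s [a]))\<bar> \<le> K"
    using assms(1) by (auto simp: goodf_def)
  obtain d L where d: "\<forall>s\<in>lang X. \<bar>\<psi> s - (\<Sum>a\<in>UNIV. d a * int (occ_count s [a]))\<bar> \<le> L"
    using assms(2) by (auto simp: goodf_def)
  have bound: "\<forall>s\<in>lang X. \<bar>(\<phi> - \<psi>) s - (\<Sum>a\<in>UNIV. (c a - d a) * int (occ_count s [a]))\<bar> \<le> K + L"
  proof
    fix s assume s: "s \<in> lang X"
    have "(\<Sum>a\<in>UNIV. (c a - d a) * int (occ_count s [a])) =
          (\<Sum>a\<in>UNIV. c a * int (occ_count s [a])) - (\<Sum>a\<in>UNIV. d a * int (occ_count s [a]))"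
      by (simp add: left_diff_distrib sum_subtractf)
    thus "\<bar>(\<phi> - \<psi>) s - (\<Sum>a\<in>UNIV. (c a - d a) * int (occ_count s [a]))\<bar> \<le> K + L"
      using c[rule_format, OF s] d[rule_format, OF s] by simp
  qed
  show ?thesis unfolding goodf_def by (rule exI[of _ "\<lambda>a. c a - d a"], rule exI[of _ "K + L"], rule bound)
qed

lemma goodf_close:
  assumes "goodf X \<phi>" "\<And>s. s \<in> lang X \<Longrightarrow> \<bar>\<phi> s - \<psi> s\<bar> \<le> L" shows "goodf X \<psi>"
proof -
  obtain c K where c: "\<forall>s\<in>lang X. \<bar>\<phi> s - (\<Sum>a\<in>UNIV. c a * int (occ_count s [a]))\<bar> \<le> K"
    using assms(1) by (auto simp: goodf_def)
  have "\<forall>s\<in>lang X. \<bar>\<psi> s - (\<Sum>a\<in>UNIV. c a * int (occ_count s [a]))\<bar> \<le> K + L"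
  proof
    fix s assume s: "s \<in> lang X"
    show "\<bar>\<psi> s - (\<Sum>a\<in>UNIV. c a * int (occ_count s [a]))\<bar> \<le> K + L"
      using c[rule_format, OF s] assms(2)[OF s] by linarith
  qed
  thus ?thesis unfolding goodf_def by blast
qed

lemma ext_adj_sym: "ext_adj X w x y = ext_adj X w y x"
  by (cases x; cases y) auto

lemma ext_adj_irr: "\<not> ext_adj X w x x"
  by (cases x) auto

definition wtf :: "'a list \<Rightarrow> ('a + 'a) \<Rightarrow> ('a + 'a) \<Rightarrow> ('a list \<Rightarrow> int)" where
  "wtf w x y = (case (x, y) of (Inl a, Inr b) \<Rightarrow> (\<lambda>s. int (occ_count s (a # w @ [b])))
      | (Inr b, Inl a) \<Rightarrow> (\<lambda>s. int (occ_count s (a # w @ [b]))) | _ \<Rightarrow> 0)"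

lemma wtf_sym: "wtf w x y = wtf w y x"
  by (cases x; cases y) (auto simp: wtf_def)

lemma good_all:
  fixes X :: "(int \<Rightarrow> 'a::finite) set"
  assumes acyc: "\<And>w. w \<in> lang X \<Longrightarrow> \<not> has_cycle (ext_vertices X w) (ext_adj X w)"
  shows "v \<in> lang X \<Longrightarrow> goodf X (\<lambda>s. int (occ_count s v))"
proof (induction "length v" arbitrary: v rule: less_induct)
  case less
  consider "v = []" | a where "v = [a]" | a w b where "v = a # w @ [b]"
    by (metis append_butlast_last_id neq_Nil_conv)
  thus ?case
  proof cases
    case 1
    have bound: "\<forall>s\<in>lang X. \<bar>int (occ_count s v) - (\<Sum>a\<in>UNIV. 1 * int (occ_count s [a]))\<bar> \<le> 1"
    proof
      fix s :: "'a list"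
      have "(\<Sum>b\<in>UNIV. occ_count s ([] @ [b])) \<le> occ_count s []"
        "occ_count s [] \<le> (\<Sum>b\<in>UNIV. occ_count s ([] @ [b])) + 1" by (rule occ_right)+
      hence "\<bar>int (occ_count s []) - (\<Sum>b\<in>UNIV. int (occ_count s [b]))\<bar> \<le> 1"
        using int_sum_close[of "\<lambda>b. occ_count s [b]" UNIV] by simp
      thus "\<bar>int (occ_count s v) - (\<Sum>a\<in>UNIV. 1 * int (occ_count s [a]))\<bar> \<le> 1"
        using 1 by simp
    qed
    show ?thesis unfolding goodf_def by (rule exI[of _ "\<lambda>a. 1"], rule exI[of _ 1], rule bound)
  next
    case (2 a)
    have bound2: "\<forall>s\<in>lang X. \<bar>int (occ_count s v) -
        (\<Sum>b\<in>UNIV. (if b = a then 1 else 0) * int (occ_count s [b]))\<bar> \<le> 0"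
    proof
      fix s :: "'a list"
      have "(\<Sum>b\<in>UNIV. (if b = a then 1 else 0) * int (occ_count s [b])) =
            (\<Sum>b\<in>UNIV. (if b = a then int (occ_count s [b]) else 0))"
        by (rule sum.cong) auto
      also have "\<dots> = int (occ_count s [a])" by (simp add: sum.delta')
      finally show "\<bar>int (occ_count s v) -
        (\<Sum>b\<in>UNIV. (if b = a then 1 else 0) * int (occ_count s [b]))\<bar> \<le> 0" using 2 by simp
    qed
    show ?thesis unfolding goodf_def by (rule exI[of _ "\<lambda>b. if b = a then 1 else 0"], rule exI[of _ 0], rule bound2)
  next
    case (3 a w b)
    have wL: "w \<in> lang X" using less.prems 3 lang_factor[of "[a]" w "[b]"] by simp
    let ?V = "ext_vertices X w" and ?adj = "ext_adj X w"
    have fin: "finite ?V" by simp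
    have "wtf w x y \<in> {\<phi>. goodf X \<phi>}"
      if "x \<in> ?V" "y \<in> ?V" "?adj x y" for x y
    proof (rule forest_edges_good[where V = "?V" and adj = ?adj and wt = "wtf w"])
      show "\<And>u v. ?adj u v \<Longrightarrow> ?adj v u" using ext_adj_sym by metis
      show "\<And>u. \<not> ?adj u u" by (rule ext_adj_irr)
      show "finite ?V" by (rule fin)
      show "\<not> has_cycle ?V ?adj" using acyc[OF wL] .
      show "\<And>u v. wtf w u v = wtf w v u" by (rule wtf_sym)
      show "0 \<in> {\<phi>. goodf X \<phi>}" using goodf_0 by simp
      show "\<And>x y. x \<in> {\<phi>. goodf X \<phi>} \<Longrightarrow> y \<in> {\<phi>. goodf X \<phi>} \<Longrightarrow> x - y \<in> {\<phi>. goodf X \<phi>}"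
        using goodf_diff by blast
      show "x \<in> ?V" "y \<in> ?V" "?adj x y" by fact+
      show "(\<Sum>y\<in>{y\<in>?V. ?adj z y}. wtf w z y) \<in> {\<phi>. goodf X \<phi>}" if z: "z \<in> ?V" for z
      proof (cases z)
        case (Inl a')
        have a'L: "a' # w \<in> lang X" using z Inl by (auto simp: ext_vertices_def left_ext_def)
        let ?B = "{b'. (a', b') \<in> bi_ext X w}"
        have N: "{y\<in>?V. ?adj z y} = Inr ` ?B"
          using Inl by (auto simp: ext_vertices_def bi_ext_def left_ext_def right_ext_def
              elim: ext_adj.elims intro: lang_pre lang_suf)
        have IH: "goodf X (\<lambda>s. int (occ_count s (a' # w)))"
          using less.hyps[OF _ a'L] 3 by simp
        have "goodf X (\<Sum>y\<in>{y\<in>?V. ?adj z y}. wtf w z y)"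
        proof (rule goodf_close[OF IH])
          fix s assume s: "s \<in> lang X"
          have "(\<Sum>y\<in>{y\<in>?V. ?adj z y}. wtf w z y) s = (\<Sum>b'\<in>?B. int (occ_count s (a' # w @ [b'])))"
            unfolding N by (simp add: sum_fun_app sum.reindex Inl wtf_def)
          also have "\<dots> = (\<Sum>b'\<in>UNIV. int (occ_count s (a' # w @ [b'])))"
            by (rule sum.mono_neutral_left) (auto simp: bi_ext_def occ_not_lang[OF s])
          also have "\<dots> = (\<Sum>b'\<in>UNIV. int (occ_count s ((a' # w) @ [b'])))"
            by simp
          finally have e: "(\<Sum>y\<in>{y\<in>?V. ?adj z y}. wtf w z y) s = (\<Sum>b'\<in>UNIV. int (occ_count s ((a' # w) @ [b'])))" .
          have "(\<Sum>b\<in>UNIV. occ_count s ((a' # w) @ [b])) \<le> occ_count s (a' # w)"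
            "occ_count s (a' # w) \<le> (\<Sum>b\<in>UNIV. occ_count s ((a' # w) @ [b])) + 1" by (rule occ_right)+
          hence "\<bar>int (occ_count s (a' # w)) - (\<Sum>b\<in>UNIV. int (occ_count s ((a' # w) @ [b])))\<bar> \<le> 1"
            by (rule int_sum_close)
          thus "\<bar>int (occ_count s (a' # w)) - (\<Sum>y\<in>{y\<in>?V. ?adj z y}. wtf w z y) s\<bar> \<le> 1"
            unfolding e by linarith
        qed
        thus ?thesis by simp
      next
        case (Inr b')
        have b'L: "w @ [b'] \<in> lang X" using z Inr by (auto simp: ext_vertices_def right_ext_def)
        let ?A = "{a'. (a', b') \<in> bi_ext X w}"
        have N: "{y\<in>?V. ?adj z y} = Inl ` ?A"
          using Inr by (auto simp: ext_vertices_def bi_ext_def left_ext_def right_ext_def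
              elim: ext_adj.elims intro: lang_pre lang_suf)
        have IH: "goodf X (\<lambda>s. int (occ_count s (w @ [b'])))"
          using less.hyps[OF _ b'L] 3 by simp
        have "goodf X (\<Sum>y\<in>{y\<in>?V. ?adj z y}. wtf w z y)"
        proof (rule goodf_close[OF IH])
          fix s assume s: "s \<in> lang X"
          have "(\<Sum>y\<in>{y\<in>?V. ?adj z y}. wtf w z y) s = (\<Sum>a'\<in>?A. int (occ_count s (a' # w @ [b'])))"
            unfolding N by (simp add: sum_fun_app sum.reindex Inr wtf_def)
          also have "\<dots> = (\<Sum>a'\<in>UNIV. int (occ_count s (a' # (w @ [b']))))"
            by (rule sum.mono_neutral_left) (auto simp: bi_ext_def occ_not_lang[OF s])
          finally have e: "(\<Sum>y\<in>{y\<in>?V. ?adj z y}. wtf w z y) s = (\<Sum>a'\<in>UNIV. int (occ_count s (a' # (w @ [b']))))" .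
          have "(\<Sum>b\<in>UNIV. occ_count s (b # (w @ [b']))) \<le> occ_count s (w @ [b'])"
            "occ_count s (w @ [b']) \<le> (\<Sum>b\<in>UNIV. occ_count s (b # (w @ [b']))) + 1" by (rule occ_left)+
          hence "\<bar>int (occ_count s (w @ [b'])) - (\<Sum>b\<in>UNIV. int (occ_count s (b # (w @ [b']))))\<bar> \<le> 1"
            by (rule int_sum_close)
          thus "\<bar>int (occ_count s (w @ [b'])) - (\<Sum>y\<in>{y\<in>?V. ?adj z y}. wtf w z y) s\<bar> \<le> 1"
            unfolding e by linarith
        qed
        thus ?thesis by simp
      qed
    qed
    moreover have "Inl a \<in> ?V" "Inr b \<in> ?V" "?adj (Inl a) (Inr b)"
      using less.prems 3 by (auto simp: ext_vertices_def left_ext_def right_ext_def bi_ext_def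
          intro: lang_pre lang_suf)
    ultimately have "goodf X (wtf w (Inl a) (Inr b))" by blast
    thus ?thesis using 3 by (simp add: wtf_def)
  qed
qed




lemma good_balanced:
  fixes X :: "(int \<Rightarrow> 'a::finite) set"
  assumes bl: "balanced_on_letters X" and g: "goodf X (\<lambda>s. int (occ_count s v))"
  shows "balanced_on X v"
proof -
  have "\<forall>a. \<exists>C::nat. \<forall>w\<in>lang X. \<forall>w'\<in>lang X. length w = length w' \<longrightarrow>
      \<bar>int (occ_count w [a]) - int (occ_count w' [a])\<bar> \<le> int C"
    using bl by (simp add: balanced_on_letters_def balanced_on_def)
  then obtain C :: "'a \<Rightarrow> nat" where C: "\<And>a w w'. w \<in> lang X \<Longrightarrow> w' \<in> lang X \<Longrightarrow> length w = length w' \<Longrightarrow>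
      \<bar>int (occ_count w [a]) - int (occ_count w' [a])\<bar> \<le> int (C a)"
    by metis
  obtain c K where cK: "\<And>s. s \<in> lang X \<Longrightarrow> \<bar>int (occ_count s v) - (\<Sum>a\<in>UNIV. c a * int (occ_count s [a]))\<bar> \<le> K"
    using g unfolding goodf_def by blast
  define B where "B = 2 * K + (\<Sum>a\<in>UNIV. \<bar>c a\<bar> * int (C a))"
  have "\<bar>int (occ_count w v) - int (occ_count w' v)\<bar> \<le> int (nat B)"
    if w: "w \<in> lang X" "w' \<in> lang X" "length w = length w'" for w w'
  proof -
    have "\<bar>(\<Sum>a\<in>UNIV. c a * int (occ_count w [a])) - (\<Sum>a\<in>UNIV. c a * int (occ_count w' [a]))\<bar>
        = \<bar>\<Sum>a\<in>UNIV. c a * (int (occ_count w [a]) - int (occ_count w' [a]))\<bar>"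
      by (simp add: sum_subtractf right_diff_distrib)
    also have "\<dots> \<le> (\<Sum>a\<in>UNIV. \<bar>c a * (int (occ_count w [a]) - int (occ_count w' [a]))\<bar>)"
      by (rule sum_abs)
    also have "\<dots> \<le> (\<Sum>a\<in>UNIV. \<bar>c a\<bar> * int (C a))"
    proof (rule sum_mono)
      fix a :: 'a
      show "\<bar>c a * (int (occ_count w [a]) - int (occ_count w' [a]))\<bar> \<le> \<bar>c a\<bar> * int (C a)"
        unfolding abs_mult by (rule mult_left_mono[OF C[OF w]]) simp
    qed
    finally have "\<bar>(\<Sum>a\<in>UNIV. c a * int (occ_count w [a])) - (\<Sum>a\<in>UNIV. c a * int (occ_count w' [a]))\<bar>
        \<le> (\<Sum>a\<in>UNIV. \<bar>c a\<bar> * int (C a))" .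
    with cK[OF w(1)] cK[OF w(2)] have "\<bar>int (occ_count w v) - int (occ_count w' v)\<bar> \<le> B"
      unfolding B_def by linarith
    thus ?thesis by linarith
  qed
  thus ?thesis unfolding balanced_on_def by blast
qed

lemma factors_letters:
  fixes X :: "(int \<Rightarrow> 'a::finite) set"
  assumes "balanced_on_factors X" shows "balanced_on_letters X"
  unfolding balanced_on_letters_def
proof
  fix a :: 'a
  show "balanced_on X [a]"
  proof (cases "[a] \<in> lang X")
    case True thus ?thesis using assms by (simp add: balanced_on_factors_def)
  next
    case False
    hence "\<And>w. w \<in> lang X \<Longrightarrow> occ_count w [a] = 0" by (rule occ_not_lang[rotated])
    thus ?thesis unfolding balanced_on_def by (intro exI[of _ 0]) auto
  qed
qed

lemma letters_factors:
  fixes X :: "(int \<Rightarrow> 'a::finite) set"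
  assumes "dendric X" "balanced_on_letters X" shows "balanced_on_factors X"
proof -
  have acyc: "\<And>w. w \<in> lang X \<Longrightarrow> \<not> has_cycle (ext_vertices X w) (ext_adj X w)"
    using assms(1) by (auto simp: dendric_def is_tree_def)
  show ?thesis unfolding balanced_on_factors_def
    using good_all[OF acyc] good_balanced[OF assms(2)] by blast
qed

lemma subshift_shift: "subshift X \<Longrightarrow> x \<in> X \<Longrightarrow> shift x \<in> X"
  unfolding subshift_def by blast

lemma linear_estimate:
  fixes X :: "(int \<Rightarrow> 'a) set"
  assumes ne: "X \<noteq> {}" and bal: "balanced_on X v"
  shows "\<exists>\<mu> K. \<forall>w\<in>lang X. \<bar>real (occ_count w v) - real (length w) * \<mu>\<bar> \<le> K"
proof -
  obtain x0 where x0: "x0 \<in> X" using ne by blast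
  obtain C :: nat where C: "\<And>w w'. w \<in> lang X \<Longrightarrow> w' \<in> lang X \<Longrightarrow> length w = length w' \<Longrightarrow>
      \<bar>int (occ_count w v) - int (occ_count w' v)\<bar> \<le> int C"
    using bal unfolding balanced_on_def by blast
  have Cr: "\<bar>real (occ_count w v) - real (occ_count w' v)\<bar> \<le> real C"
    if "w \<in> lang X" "w' \<in> lang X" "length w = length w'" for w w'
  proof -
    have "\<bar>int (occ_count w v) - int (occ_count w' v)\<bar> \<le> int C" using C[OF that] .
    hence "real_of_int \<bar>int (occ_count w v) - int (occ_count w' v)\<bar> \<le> real_of_int (int C)"
      by (simp only: of_int_le_iff)
    thus ?thesis by simp
  qed
  define W where "W n = word_at x0 0 n" for n
  have WL: "W n \<in> lang X" for n using word_at_lang[OF x0] by (simp add: W_def)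
  have Wl: "length (W n) = n" for n by (simp add: W_def)
  define a where "a n = real (occ_count (W n) v)" for n
  define D where "D = 2 * real C + real (length v) + 1"
  have D0: "D \<ge> 1" by (simp add: D_def)
  have quasi: "a (m + n) \<le> a m + a n + D \<and> a m + a n - D \<le> a (m + n)" for m n
  proof -
    define p where "p = take m (W (m + n))"
    define q where "q = drop m (W (m + n))"
    have pq: "W (m + n) = p @ q" by (simp add: p_def q_def)
    have pL: "p \<in> lang X" using WL[of "m+n"] pq lang_factor[of "[]" p q] by simp
    have qL: "q \<in> lang X" using WL[of "m+n"] pq lang_factor[of p q "[]"] by simp
    have lp: "length p = m" and lq: "length q = n" using Wl[of "m+n"] by (simp_all add: p_def q_def)
    have "\<bar>real (occ_count p v) - a m\<bar> \<le> real C" unfolding a_def using Cr[OF pL WL] lp Wl by simp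
    moreover have "\<bar>real (occ_count q v) - a n\<bar> \<le> real C" unfolding a_def using Cr[OF qL WL] lq Wl by simp
    moreover have "real (occ_count (p @ q) v) \<le> real (occ_count p v) + real (occ_count q v) + real (length v)"
      using of_nat_mono[OF occ_app_le[of p q v], where 'a=real] by simp
    moreover have "real (occ_count p v) + real (occ_count q v) \<le> real (occ_count (p @ q) v) + 1"
      using of_nat_mono[OF occ_app_ge[of p v q], where 'a=real] by simp
    ultimately show ?thesis unfolding D_def a_def[of "m+n"] pq by linarith
  qed
  define c where "c n = a n - D" for n
  define b where "b n = a n + D" for n
  have csup: "c (m + n) \<ge> c m + c n" for m n using quasi[of m n] by (simp add: c_def)
  have bsub: "b (m + n) \<le> b m + b n" for m n using quasi[of m n] by (simp add: b_def)
  have citer: "c (Suc k * m) \<ge> real (Suc k) * c m" for k m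
  proof (induction k)
    case 0 thus ?case by simp
  next
    case (Suc k)
    have "c (Suc (Suc k) * m) = c (Suc k * m + m)" by (simp add: add.commute)
    also have "\<dots> \<ge> c (Suc k * m) + c m" by (rule csup)
    finally show ?case using Suc by (simp add: algebra_simps)
  qed
  have biter: "b (Suc k * m) \<le> real (Suc k) * b m" for k m
  proof (induction k)
    case 0 thus ?case by simp
  next
    case (Suc k)
    have "b (Suc (Suc k) * m) = b (Suc k * m + m)" by (simp add: add.commute)
    also have "\<dots> \<le> b (Suc k * m) + b m" by (rule bsub)
    finally show ?case using Suc by (simp add: algebra_simps)
  qed
  have a_le: "a n \<le> real n + 1" for n
    unfolding a_def using of_nat_mono[OF occ_le[of "W n" v], where 'a=real] Wl[of n] by simp
  define S where "S = (\<lambda>n. c n / real n) ` {1..}"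
  have Sne: "S \<noteq> {}" by (simp add: S_def)
  have Sbdd: "bdd_above S"
  proof (rule bdd_aboveI[of _ 2])
    fix y assume "y \<in> S"
    then obtain n where n: "n \<ge> 1" "y = c n / real n" by (auto simp: S_def)
    have "c n \<le> 2 * real n" using a_le[of n] D0 n(1) by (simp add: c_def)
    thus "y \<le> 2" using n by (simp add: divide_le_eq)
  qed
  define \<mu> where "\<mu> = Sup S"
  have lower: "c n \<le> real n * \<mu>" if "n \<ge> 1" for n
  proof -
    have "c n / real n \<le> \<mu>" unfolding \<mu>_def using that by (intro cSup_upper[OF _ Sbdd]) (auto simp: S_def)
    thus ?thesis using that by (simp add: divide_le_eq mult.commute)
  qed
  have upper: "real n * \<mu> \<le> b n" if n: "n \<ge> 1" for n
  proof -
    have "\<mu> \<le> b n / real n" unfolding \<mu>_def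
    proof (rule cSup_least[OF Sne])
      fix y assume "y \<in> S"
      then obtain m where m: "m \<ge> 1" "y = c m / real m" by (auto simp: S_def)
      obtain k where k: "n = Suc k" using n by (cases n) auto
      obtain j where j: "m = Suc j" using m by (cases m) auto
      have "real n * c m \<le> c (n * m)" using citer[of k m] k by simp
      also have "\<dots> \<le> b (n * m)" by (simp add: c_def b_def D_def)
      also have "b (n * m) = b (m * n)" by (simp add: mult.commute)
      also have "\<dots> \<le> real m * b n" using biter[of j n] j by simp
      finally have "real n * c m \<le> real m * b n" .
      have mpos: "real m > 0" and npos: "real n > 0" using m n by auto
      have ym: "y * real m = c m" using m mpos by simp
      have "real m * (y * real n) = real n * c m" using ym by (simp add: algebra_simps)
      hence "real m * (y * real n) \<le> real m * b n" using \<open>real n * c m \<le> real m * b n\<close> by linarith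
      hence "y * real n \<le> b n" using mpos by (rule mult_left_le_imp_le)
      thus "y \<le> b n / real n" using npos by (simp add: le_divide_eq)
    qed
    thus ?thesis using n by (simp add: le_divide_eq mult.commute)
  qed
  have "\<bar>real (occ_count w v) - real (length w) * \<mu>\<bar> \<le> real C + D + 1" if w: "w \<in> lang X" for w
  proof (cases "length w = 0")
    case True
    have "occ_count w v \<le> 1" using occ_le[of w v] True by simp
    hence "real (occ_count w v) \<le> 1" by simp
    thus ?thesis using True D0 by simp
  next
    case False
    hence n1: "length w \<ge> 1" by linarith
    have "\<bar>real (occ_count w v) - a (length w)\<bar> \<le> real C" unfolding a_def using Cr[OF w WL] Wl by simp
    thus ?thesis using lower[OF n1] upper[OF n1] D0 unfolding c_def b_def by linarith
  qed
  thus ?thesis by blast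
qed




lemma freq:
  assumes est: "\<And>w. w \<in> lang X \<Longrightarrow> \<bar>real (occ_count w v) - real (length w) * \<mu>\<bar> \<le> K"
  shows "is_frequency X v \<mu>"
  unfolding is_frequency_def
proof (intro allI impI)
  fix \<epsilon> :: real assume e: "\<epsilon> > 0"
  define N where "N = nat \<lceil>\<bar>K\<bar> / \<epsilon>\<rceil> + 1"
  have "\<bar>real (occ_count w v) / real (length w) - \<mu>\<bar> < \<epsilon>" if w: "w \<in> lang X" "length w \<ge> N" for w
  proof -
    let ?n = "real (length w)"
    have "length w > 0" using w(2) unfolding N_def by linarith
    hence npos: "?n > 0" by simp
    have "\<bar>K\<bar> / \<epsilon> \<le> real (nat \<lceil>\<bar>K\<bar> / \<epsilon>\<rceil>)" by linarith
    hence "\<bar>K\<bar> / \<epsilon> < ?n" using w(2) unfolding N_def by linarith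
    hence Kn: "\<bar>K\<bar> < \<epsilon> * ?n" using e by (simp add: divide_less_eq mult.commute)
    have "real (occ_count w v) / ?n - \<mu> = (real (occ_count w v) - ?n * \<mu>) / ?n"
      using npos by (simp add: field_simps)
    hence "\<bar>real (occ_count w v) / ?n - \<mu>\<bar> = \<bar>real (occ_count w v) - ?n * \<mu>\<bar> / ?n"
      using npos by simp
    also have "\<dots> \<le> \<bar>K\<bar> / ?n" using est[OF w(1)] npos by (intro divide_right_mono) auto
    also have "\<dots> < \<epsilon>" using Kn npos by (simp add: divide_less_eq)
    finally show ?thesis .
  qed
  thus "\<exists>N. \<forall>w\<in>lang X. N \<le> length w \<longrightarrow> \<bar>real (occ_count w v) / real (length w) - \<mu>\<bar> < \<epsilon>"
    by blast
qed

lemma shift_pow: "(shift ^^ i) x = (\<lambda>j. x (j + int i))"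
proof (induction i arbitrary: x)
  case 0 thus ?case by simp
next
  case (Suc i)
  have "(shift ^^ Suc i) x = shift ((shift ^^ i) x)" by simp
  also have "\<dots> = (\<lambda>j. x (j + int (Suc i)))" unfolding Suc shift_def by (simp add: algebra_simps)
  finally show ?case .
qed

lemma shift_pow_in: "subshift X \<Longrightarrow> x \<in> X \<Longrightarrow> (shift ^^ i) x \<in> X"
  by (induction i) (auto intro: subshift_shift)

lemma occurs_at_shift_pow: "occurs_at v ((shift ^^ i) x) 0 \<longleftrightarrow> occurs_at v x (int i)"
  by (simp add: occurs_at_def shift_pow add.commute)

lemma window:
  assumes est: "\<And>w. w \<in> lang X \<Longrightarrow> \<bar>real (occ_count w v) - real (length w) * \<mu>\<bar> \<le> K"
    and x: "x \<in> X"
  shows "\<bar>real (card {i. i < n \<and> occurs_at v x (a + int i)}) - real n * \<mu>\<bar> \<le> \<bar>K\<bar> + real (length v) * \<bar>\<mu>\<bar> + 1"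
proof -
  let ?w = "word_at x a (n + length v)"
  let ?A = "{i. i < n \<and> occurs_at v x (a + int i)}"
  let ?A' = "{i. i \<le> n \<and> occurs_at v x (a + int i)}"
  have occ: "occ_count ?w v = card ?A'"
    unfolding occ_count_Occ Occ_word_at by simp
  have fin: "finite ?A'" by (rule finite_subset[of _ "{..n}"]) auto
  have "card ?A \<le> card ?A'" by (rule card_mono[OF fin]) auto
  moreover have "card ?A' \<le> card (insert n ?A)" by (rule card_mono) auto
  moreover have "card (insert n ?A) \<le> card ?A + 1" by (simp add: card_insert_if)
  ultimately have n1: "card ?A \<le> card ?A'" and n2: "card ?A' \<le> card ?A + 1" by simp_all
  have c1a: "real (card ?A) \<le> real (card ?A')" using n1 by (rule of_nat_mono)
  have "real (card ?A') \<le> real (card ?A + 1)" using n2 by (rule of_nat_mono)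
  hence c1b: "real (card ?A') \<le> real (card ?A) + 1" by simp
  note c1 = c1a c1b
  have e: "\<bar>real (card ?A') - real (n + length v) * \<mu>\<bar> \<le> K"
    using est[OF word_at_lang[OF x, of a "n + length v"]] occ by simp
  have "\<bar>real (length v) * \<mu>\<bar> \<le> real (length v) * \<bar>\<mu>\<bar>" by (simp add: abs_mult)
  thus ?thesis using c1 e by (simp add: algebra_simps)
qed

lemma brs:
  assumes est: "\<And>w. w \<in> lang X \<Longrightarrow> \<bar>real (occ_count w v) - real (length w) * \<mu>\<bar> \<le> K"
    and sub: "subshift X"
  shows "bounded_remainder_set X v \<mu>"
  unfolding bounded_remainder_set_def
proof (intro exI ballI allI)
  fix x n assume x: "x \<in> X"
  have "{i. i < n \<and> (shift ^^ i) x \<in> cylinder X v} = {i. i < n \<and> occurs_at v x (0 + int i)}"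
    using shift_pow_in[OF sub x] by (auto simp: cylinder_def occurs_at_shift_pow)
  thus "\<bar>real (card {i. i < n \<and> (shift ^^ i) x \<in> cylinder X v}) - real n * \<mu>\<bar> \<le> \<bar>K\<bar> + real (length v) * \<bar>\<mu>\<bar> + 1"
    using window[OF est x, of n 0] by simp
qed




lemma topspace_full: "topspace full_shift_top = UNIV"
  by (auto simp: full_shift_top_def PiE_iff)

lemma open_local:
  assumes fin: "finite J" and loc: "\<And>x y. (\<forall>j\<in>J. x j = y j) \<Longrightarrow> P x \<Longrightarrow> P y"
  shows "openin full_shift_top {x. P x}"
proof -
  define U where "U y = (\<Pi>\<^sub>E j\<in>UNIV. (if j \<in> J then {y j} else UNIV))" for y :: "int \<Rightarrow> 'a"
  have memU: "x \<in> U y \<longleftrightarrow> (\<forall>j\<in>J. x j = y j)" for x y by (auto simp: U_def PiE_iff)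
  have "{x. P x} = \<Union> (U ` {x. P x})"
  proof
    show "{x. P x} \<subseteq> \<Union> (U ` {x. P x})" using memU by blast
    show "\<Union> (U ` {x. P x}) \<subseteq> {x. P x}" using memU loc by (metis (mono_tags, lifting) UN_E mem_Collect_eq subsetI)
  qed
  moreover have "openin full_shift_top (U y)" for y
    unfolding U_def full_shift_top_def
    by (rule product_topology_basis) (auto intro: finite_subset[OF _ fin])
  ultimately show ?thesis by (metis imageE openin_Union)
qed

lemma openin_sub:
  assumes "openin full_shift_top T" shows "openin (subtopology full_shift_top X) (X \<inter> T)"
  unfolding openin_subtopology using assms by blast

locale eig =
  fixes X :: "(int \<Rightarrow> 'a) set" and v :: "'a list" and \<mu> K :: real
  assumes mini: "minimal_subshift X"
    and est: "\<And>w. w \<in> lang X \<Longrightarrow> \<bar>real (occ_count w v) - real (length w) * \<mu>\<bar> \<le> K"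
begin

definition B where "B = \<bar>K\<bar> + real (length v) * \<bar>\<mu>\<bar> + 1"

definition f where "f x i = (if occurs_at v x i then 1 else 0) - \<mu>"

definition \<sigma> where "\<sigma> x k = (if 0 \<le> k then (\<Sum>i<nat k. f x (int i)) else - (\<Sum>i<nat (-k). f x (k + int i)))"

lemma sub: "subshift X" using mini by (simp add: minimal_subshift_def)

lemma sum_f: "(\<Sum>i<n. f x (a + int i)) = real (card {i. i < n \<and> occurs_at v x (a + int i)}) - real n * \<mu>"
proof (induction n)
  case 0 thus ?case by simp
next
  case (Suc n)
  have "{i. i < Suc n \<and> occurs_at v x (a + int i)} =
        (if occurs_at v x (a + int n) then insert n else id) {i. i < n \<and> occurs_at v x (a + int i)}"
    by (auto simp: less_Suc_eq)
  thus ?case using Suc by (simp add: f_def algebra_simps)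
qed

lemma sigma_bound:
  assumes x: "x \<in> X" shows "\<bar>\<sigma> x k\<bar> \<le> B"
proof -
  have w: "\<bar>(\<Sum>i<n. f x (a + int i))\<bar> \<le> B" for n a
    unfolding sum_f B_def using window[OF est x] by blast
  show ?thesis
  proof (cases "0 \<le> k")
    case True
    thus ?thesis using w[where n="nat k" and a=0] by (simp add: \<sigma>_def)
  next
    case False
    thus ?thesis using w[where n="nat (-k)" and a=k] by (simp add: \<sigma>_def)
  qed
qed

lemma f_shift: "f (shift x) i = f x (i + 1)"
  by (simp add: f_def occurs_at_def shift_def algebra_simps)

lemma sigma_shift: "\<sigma> (shift x) k = \<sigma> x (k + 1) - f x 0"
proof (cases "0 \<le> k")
  case True
  have nk: "nat (k + 1) = Suc (nat k)" using True by simp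
  have "\<sigma> x (k + 1) = (\<Sum>i<nat (k + 1). f x (int i))" using True unfolding \<sigma>_def by simp
  also have "\<dots> = (\<Sum>i<Suc (nat k). f x (int i))" by (simp only: nk)
  also have "\<dots> = f x 0 + (\<Sum>i<nat k. f x (int (Suc i)))" by (rule trans[OF sum.lessThan_Suc_shift]) simp
  also have "(\<Sum>i<nat k. f x (int (Suc i))) = \<sigma> (shift x) k"
    using True by (simp add: \<sigma>_def f_shift add.commute)
  finally show ?thesis by simp
next
  case False
  obtain j where j: "nat (-k) = Suc j" using False by (cases "nat (-k)") auto
  have kj: "k + int j + 1 = 0" using j False by linarith
  have "\<sigma> (shift x) k = - (\<Sum>i<Suc j. f x (k + int i + 1))"
    using False j by (simp add: \<sigma>_def f_shift)
  also have "\<dots> = - (\<Sum>i<j. f x (k + int i + 1)) - f x 0"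
    using kj by simp
  also have "- (\<Sum>i<j. f x (k + int i + 1)) = \<sigma> x (k + 1)"
  proof (cases "0 \<le> k + 1")
    case True
    hence "j = 0" using kj by linarith
    hence "nat (k + 1) = 0" using kj by simp
    thus ?thesis using True \<open>j = 0\<close> by (simp add: \<sigma>_def)
  next
    case F2: False
    have "nat (- (k + 1)) = j" using kj by linarith
    thus ?thesis using F2 by (simp add: \<sigma>_def algebra_simps)
  qed
  finally show ?thesis .
qed

definition u where "u x = Sup (range (\<sigma> x))"
definition l where "l x = Inf (range (\<sigma> x))"

lemma bdd: "x \<in> X \<Longrightarrow> bdd_above (range (\<sigma> x))" "x \<in> X \<Longrightarrow> bdd_below (range (\<sigma> x))"
proof -
  assume x: "x \<in> X"
  have "\<sigma> x k \<le> B" for k using sigma_bound[OF x, of k] by linarith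
  thus "bdd_above (range (\<sigma> x))" by (auto intro!: bdd_aboveI[of _ B])
next
  assume x: "x \<in> X"
  have "-B \<le> \<sigma> x k" for k using sigma_bound[OF x, of k] by linarith
  thus "bdd_below (range (\<sigma> x))" by (auto intro!: bdd_belowI[of _ "-B"])
qed

lemma u_shift:
  assumes x: "x \<in> X" shows "u (shift x) = u x - f x 0"
proof -
  have sx: "shift x \<in> X" using subshift_shift[OF sub x] .
  have "u (shift x) \<le> u x - f x 0" unfolding u_def
  proof (rule cSup_least)
    fix y assume "y \<in> range (\<sigma> (shift x))"
    then obtain k where "y = \<sigma> (shift x) k" by auto
    hence "y = \<sigma> x (k + 1) - f x 0" by (simp add: sigma_shift)
    moreover have "\<sigma> x (k + 1) \<le> Sup (range (\<sigma> x))" by (rule cSup_upper[OF _ bdd(1)[OF x]]) auto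
    ultimately show "y \<le> Sup (range (\<sigma> x)) - f x 0" by simp
  qed auto
  moreover have "u x \<le> u (shift x) + f x 0" unfolding u_def
  proof (rule cSup_least)
    fix y assume "y \<in> range (\<sigma> x)"
    then obtain k where "y = \<sigma> x k" by auto
    hence "y = \<sigma> (shift x) (k - 1) + f x 0" by (simp add: sigma_shift)
    moreover have "\<sigma> (shift x) (k - 1) \<le> Sup (range (\<sigma> (shift x)))" by (rule cSup_upper[OF _ bdd(1)[OF sx]]) auto
    ultimately show "y \<le> Sup (range (\<sigma> (shift x))) + f x 0" by simp
  qed auto
  ultimately show ?thesis by simp
qed

lemma l_shift:
  assumes x: "x \<in> X" shows "l (shift x) = l x - f x 0"
proof -
  have sx: "shift x \<in> X" using subshift_shift[OF sub x] .
  have "l x - f x 0 \<le> l (shift x)" unfolding l_def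
  proof (rule cInf_greatest)
    fix y assume "y \<in> range (\<sigma> (shift x))"
    then obtain k where "y = \<sigma> (shift x) k" by auto
    hence "y = \<sigma> x (k + 1) - f x 0" by (simp add: sigma_shift)
    moreover have "Inf (range (\<sigma> x)) \<le> \<sigma> x (k + 1)" by (rule cInf_lower[OF _ bdd(2)[OF x]]) auto
    ultimately show "Inf (range (\<sigma> x)) - f x 0 \<le> y" by simp
  qed auto
  moreover have "l (shift x) + f x 0 \<le> l x" unfolding l_def
  proof (rule cInf_greatest)
    fix y assume "y \<in> range (\<sigma> x)"
    then obtain k where "y = \<sigma> x k" by auto
    hence "y = \<sigma> (shift x) (k - 1) + f x 0" by (simp add: sigma_shift)
    moreover have "Inf (range (\<sigma> (shift x))) \<le> \<sigma> (shift x) (k - 1)" by (rule cInf_lower[OF _ bdd(2)[OF sx]]) auto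
    ultimately show "Inf (range (\<sigma> (shift x))) + f x 0 \<le> y" by simp
  qed auto
  ultimately show ?thesis by simp
qed

lemma sigma_local:
  assumes "\<forall>j\<in>{- \<bar>k\<bar>..<\<bar>k\<bar> + int (length v)}. x j = y j"
  shows "\<sigma> x k = \<sigma> y k"
proof -
  have fe: "f x i = f y i" if "- \<bar>k\<bar> \<le> i" "i < \<bar>k\<bar>" for i
  proof -
    have "occurs_at v x i = occurs_at v y i"
      unfolding occurs_at_def using assms that by auto
    thus ?thesis by (simp add: f_def)
  qed
  show ?thesis unfolding \<sigma>_def
    by (auto intro!: sum.cong fe)
qed

lemma open_sigma_gt: "openin full_shift_top {x. r < \<sigma> x k}"
  by (rule open_local[of "{- \<bar>k\<bar>..<\<bar>k\<bar> + int (length v)}"]) (auto dest: sigma_local)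

lemma open_sigma_lt: "openin full_shift_top {x. \<sigma> x k < r}"
  by (rule open_local[of "{- \<bar>k\<bar>..<\<bar>k\<bar> + int (length v)}"]) (auto dest: sigma_local)

lemma open_sigma_diff: "openin full_shift_top {x. r < \<sigma> x k - \<sigma> x m}"
proof -
  let ?J = "{- \<bar>k\<bar>..<\<bar>k\<bar> + int (length v)} \<union> {- \<bar>m\<bar>..<\<bar>m\<bar> + int (length v)}"
  show ?thesis
  proof (rule open_local[of ?J])
    show "finite ?J" by simp
    fix x y :: "int \<Rightarrow> 'a" assume e: "\<forall>j\<in>?J. x j = y j" and r: "r < \<sigma> x k - \<sigma> x m"
    have "\<sigma> x k = \<sigma> y k" by (rule sigma_local) (use e in auto)
    moreover have "\<sigma> x m = \<sigma> y m" by (rule sigma_local) (use e in auto)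
    ultimately show "r < \<sigma> y k - \<sigma> y m" using r by simp
  qed
qed

lemma u_gt: "x \<in> X \<Longrightarrow> r < u x \<longleftrightarrow> (\<exists>k. r < \<sigma> x k)"
  unfolding u_def using less_cSup_iff[OF _ bdd(1)] by auto

lemma l_lt: "x \<in> X \<Longrightarrow> l x < r \<longleftrightarrow> (\<exists>k. \<sigma> x k < r)"
  unfolding l_def using cInf_less_iff[OF _ bdd(2)] by auto

lemma D_gt: "x \<in> X \<Longrightarrow> t < u x - l x \<longleftrightarrow> (\<exists>k m. t < \<sigma> x k - \<sigma> x m)"
proof
  assume x: "x \<in> X" and lt: "t < u x - l x"
  define \<delta> where "\<delta> = (u x - l x - t) / 2"
  have "u x - \<delta> < u x" using lt by (simp add: \<delta>_def)
  then obtain k where k: "u x - \<delta> < \<sigma> x k" using u_gt[OF x] by blast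
  have "l x < l x + \<delta>" using lt by (simp add: \<delta>_def)
  then obtain m where m: "\<sigma> x m < l x + \<delta>" using l_lt[OF x] by blast
  have "(u x - \<delta>) - (l x + \<delta>) = t" by (simp add: \<delta>_def field_simps)
  hence "t < \<sigma> x k - \<sigma> x m" using k m by linarith
  thus "\<exists>k m. t < \<sigma> x k - \<sigma> x m" by blast
next
  assume x: "x \<in> X" and "\<exists>k m. t < \<sigma> x k - \<sigma> x m"
  then obtain k m where km: "t < \<sigma> x k - \<sigma> x m" by blast
  have "\<sigma> x k \<le> u x" unfolding u_def by (rule cSup_upper[OF _ bdd(1)[OF x]]) auto
  moreover have "l x \<le> \<sigma> x m" unfolding l_def by (rule cInf_lower[OF _ bdd(2)[OF x]]) auto
  ultimately show "t < u x - l x" using km by linarith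
qed

lemma D_const:
  assumes x: "x \<in> X" and y: "y \<in> X" shows "u x - l x \<le> u y - l y"
proof -
  define t where "t = u y - l y"
  define Y where "Y = {z \<in> X. u z - l z \<le> t}"
  have XY: "X - Y = X \<inter> (\<Union>k. \<Union>m. {z. t < \<sigma> z k - \<sigma> z m})"
  proof (rule set_eqI)
    fix z show "z \<in> X - Y \<longleftrightarrow> z \<in> X \<inter> (\<Union>k. \<Union>m. {z. t < \<sigma> z k - \<sigma> z m})"
      using D_gt[of z t] unfolding Y_def by auto
  qed
  have "openin (subtopology full_shift_top X) (X - Y)"
    unfolding XY by (rule openin_sub) (auto intro!: openin_Union open_sigma_diff)
  hence "closedin (subtopology full_shift_top X) Y"
    unfolding closedin_def by (simp add: topspace_full) (auto simp: Y_def)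
  hence cY: "closedin full_shift_top Y"
    using sub unfolding subshift_def by (blast intro: closedin_trans_full)
  have inv: "u (shift z) - l (shift z) = u z - l z" if "z \<in> X" for z
    using u_shift[OF that] l_shift[OF that] by simp
  have "shift ` Y = Y"
  proof
    show "shift ` Y \<subseteq> Y" using inv subshift_shift[OF sub] by (auto simp: Y_def)
    show "Y \<subseteq> shift ` Y"
    proof
      fix z assume z: "z \<in> Y"
      hence "z \<in> shift ` X" using sub by (simp add: subshift_def Y_def)
      then obtain z' where z': "z' \<in> X" "z = shift z'" by auto
      hence "z' \<in> Y" using z inv[OF z'(1)] by (simp add: Y_def)
      thus "z \<in> shift ` Y" using z' by blast
    qed
  qed
  hence "subshift Y" using cY by (simp add: subshift_def)
  moreover have "Y \<subseteq> X" "Y \<noteq> {}" using y by (auto simp: Y_def t_def)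
  ultimately have "Y = X" using mini unfolding minimal_subshift_def by blast
  thus ?thesis using x by (auto simp: Y_def t_def)
qed

lemma u_cont: "continuous_map (subtopology full_shift_top X) euclideanreal u"
proof -
  obtain x0 where x0: "x0 \<in> X" using mini by (auto simp: minimal_subshift_def)
  define c where "c = u x0 - l x0"
  have uc: "u x = l x + c" if "x \<in> X" for x
    using D_const[OF that x0] D_const[OF x0 that] by (simp add: c_def)
  have ts: "topspace (subtopology full_shift_top X) = X" by (simp add: topspace_full)
  show ?thesis
    unfolding continuous_map_upper_lower_semicontinuous_lt ts
  proof (intro allI conjI)
    fix r
    have "{x \<in> X. u x > r} = X \<inter> (\<Union>k. {x. r < \<sigma> x k})"
    proof (rule set_eqI)
      fix x show "x \<in> {x \<in> X. u x > r} \<longleftrightarrow> x \<in> X \<inter> (\<Union>k. {x. r < \<sigma> x k})"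
        using u_gt[of x r] by auto
    qed
    thus "openin (subtopology full_shift_top X) {x \<in> X. u x > r}"
      by (simp only:) (rule openin_sub, auto intro!: openin_Union open_sigma_gt)
    have "{x \<in> X. u x < r} = X \<inter> (\<Union>k. {x. \<sigma> x k < r - c})"
    proof (rule set_eqI)
      fix x show "x \<in> {x \<in> X. u x < r} \<longleftrightarrow> x \<in> X \<inter> (\<Union>k. {x. \<sigma> x k < r - c})"
      proof (cases "x \<in> X")
        case True
        have "u x < r \<longleftrightarrow> l x < r - c" using uc[OF True] by linarith
        thus ?thesis using l_lt[OF True, of "r - c"] True by auto
      qed auto
    qed
    thus "openin (subtopology full_shift_top X) {x \<in> X. u x < r}"
      by (simp only:) (rule openin_sub, auto intro!: openin_Union open_sigma_lt)
  qed
qed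

lemma eigen: "additive_top_eigenvalue X \<mu>"
  unfolding additive_top_eigenvalue_def
proof (intro exI conjI)
  let ?g = "\<lambda>x. exp (2 * pi * \<i> * complex_of_real (u x))"
  have "continuous_map euclideanreal euclidean (\<lambda>t::real. exp (2 * pi * \<i> * complex_of_real t))"
    by (simp add: continuous_intros)
  from continuous_map_compose[OF u_cont this]
  show "continuous_map (subtopology full_shift_top X) euclidean ?g" by (simp add: o_def)
  obtain x0 where x0: "x0 \<in> X" using mini by (auto simp: minimal_subshift_def)
  show "\<exists>x\<in>X. ?g x \<noteq> 0" using x0 by auto
  show "\<forall>x\<in>X. ?g (shift x) = exp (2 * pi * \<i> * complex_of_real \<mu>) * ?g x"
  proof
    fix x assume x: "x \<in> X"
    show "?g (shift x) = exp (2 * pi * \<i> * complex_of_real \<mu>) * ?g x"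
    proof (cases "occurs_at v x 0")
      case True
      have "u (shift x) = u x + \<mu> - 1" using u_shift[OF x] True by (simp add: f_def)
      hence e: "complex_of_real (u (shift x)) = complex_of_real \<mu> + complex_of_real (u x) - 1"
        by simp
      have "2 * pi * \<i> * complex_of_real (u (shift x)) = 2 * pi * \<i> * complex_of_real \<mu> + 2 * pi * \<i> * complex_of_real (u x) - 2 * pi * \<i>"
        unfolding e by (simp add: algebra_simps)
      hence "?g (shift x) = exp (2 * pi * \<i> * complex_of_real \<mu> + 2 * pi * \<i> * complex_of_real (u x) - 2 * pi * \<i>)"
        by simp
      also have "\<dots> = exp (2 * pi * \<i> * complex_of_real \<mu>) * ?g x"
        by (simp add: exp_diff exp_add)
      finally show ?thesis .
    next
      case False
      have "u (shift x) = u x + \<mu>" using u_shift[OF x] False by (simp add: f_def)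
      hence "?g (shift x) = exp (2 * pi * \<i> * complex_of_real \<mu> + 2 * pi * \<i> * complex_of_real (u x))"
        by (simp add: algebra_simps)
      also have "\<dots> = exp (2 * pi * \<i> * complex_of_real \<mu>) * ?g x"
        by (simp add: exp_add)
      finally show ?thesis .
    qed
  qed
qed

end



theorem theorem1p1:
  fixes X :: "(int \<Rightarrow> 'a::finite) set"
  assumes "minimal_subshift X" and "dendric X"
  shows "(balanced_on_letters X \<longleftrightarrow> balanced_on_factors X) \<and>
         (balanced_on_letters X \<longrightarrow>
            (\<forall>v\<in>lang X. \<exists>\<mu>. is_frequency X v \<mu> \<and> additive_top_eigenvalue X \<mu> \<and>
                              bounded_remainder_set X v \<mu>))"
proof (intro conjI impI ballI)
  show "balanced_on_letters X \<longleftrightarrow> balanced_on_factors X"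
    using letters_factors[OF assms(2)] factors_letters by blast
next
  fix v assume bl: "balanced_on_letters X" and v: "v \<in> lang X"
  have bv: "balanced_on X v" using letters_factors[OF assms(2) bl] v
    by (simp add: balanced_on_factors_def)
  have ne: "X \<noteq> {}" using assms(1) by (simp add: minimal_subshift_def)
  obtain \<mu> K where est: "\<forall>w\<in>lang X. \<bar>real (occ_count w v) - real (length w) * \<mu>\<bar> \<le> K"
    using linear_estimate[OF ne bv] by blast
  have est': "\<And>w. w \<in> lang X \<Longrightarrow> \<bar>real (occ_count w v) - real (length w) * \<mu>\<bar> \<le> K"
    using est by blast
  interpret E: eig X v \<mu> K
    by unfold_locales (use assms(1) est' in auto)
  have "is_frequency X v \<mu>" by (rule freq[OF est'])
  moreover have "additive_top_eigenvalue X \<mu>" by (rule E.eigen)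
  moreover have "bounded_remainder_set X v \<mu>" by (rule brs[OF est' E.sub])
  ultimately show "\<exists>\<mu>. is_frequency X v \<mu> \<and> additive_top_eigenvalue X \<mu> \<and> bounded_remainder_set X v \<mu>"
    by blast
qed

end
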